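(* Let $\mu$ be a positive Borel measure on $\mathbb{R}$, absolutely continuous with respect to Lebesgue measure, with finite moments of all orders, supported on a set $E$ with infinitely many points, let $c\in\mathbb{R}\setminus E$, $N>0$, and assume $\mu$ is classical or semi-classical, so that its monic orthogonal polynomials satisfy $xP_n=P_{n+1}+\beta_nP_n+\gamma_nP_{n-1}$ and a structure relation $\sigma(x)P_n'(x)=a(x;n)P_n(x)+b(x;n)P_{n-1}(x)$ with polynomials $\sigma$, $a(x;n)$, $b(x;n)$ whose degrees do not depend on $n$. With $\Lambda_n^c$ as in the context, define $$B_2(x;n)=\Lambda_{n-1}^c\Big(\frac{1}{\Lambda_{n-1}^c}+\frac{x-\beta_{n-1}}{\gamma_{n-1}}\Big),\qquad \Delta(x;n)=B_2(x;n)+\frac{\Lambda_n^c\Lambda_{n-1}^c}{\gamma_{n-1}},$$ $$C_1(x;n)=\frac{1}{\sigma(x)}\Big(a(x;n)-\Lambda_n^c\frac{b(x;n-1)}{\gamma_{n-1}}\Big),\qquad D_1(x;n)=\frac{1}{\sigma(x)}\Big(b(x;n)+\Lambda_n^c\,b(x;n-1)\Big(\frac{a(x;n-1)}{b(x;n-1)}+\frac{x-\beta_{n-1}}{\gamma_{n-1}}\Big)\Big),$$ $$C_2(x;n)=\frac{-\Lambda_{n-1}^c}{\sigma(x)}\Big(\frac{a(x;n)}{\gamma_{n-1}}+\frac{b(x;n-1)}{\gamma_{n-1}}\Big(\frac{1}{\Lambda_{n-1}^c}+\frac{x-\beta_{n-1}}{\gamma_{n-1}}\Big)\Big),$$ $$D_2(x;n)=\frac{\Lambda_{n-1}^c}{\sigma(x)}\Big[\frac{\sigma(x)-b(x;n)}{\gamma_{n-1}}+b(x;n-1)\Big(\frac{a(x;n-1)}{b(x;n-1)}+\frac{x-\beta_{n-1}}{\gamma_{n-1}}\Big)\Big(\frac{1}{\Lambda_{n-1}^c}+\frac{x-\beta_{n-1}}{\gamma_{n-1}}\Big)\Big],$$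 and for $k=1,2$ $$\xi_k^c(x;n)=\frac{C_k(x;n)B_2(x;n)\gamma_{n-1}+D_k(x;n)\Lambda_{n-1}^c}{\Delta(x;n)\gamma_{n-1}},\qquad \eta_k^c(x;n)=\frac{D_k(x;n)-C_k(x;n)\Lambda_n^c}{\Delta(x;n)}.$$ Then $\deg\Delta(x;n)=1$, and the differential operators $\mathfrak a_n=-\xi_1^c(x;n)\mathrm I+\mathrm D_x$ and $\mathfrak a_n^\dagger=-\eta_2^c(x;n)\mathrm I+\mathrm D_x$ ($\mathrm I$ the identity, $\mathrm D_x$ the derivative) satisfy $$\mathfrak a_n[Q_n^{c,N}(x)]=\eta_1^c(x;n)\,Q_{n-1}^{c,N}(x),\qquad \mathfrak a_n^\dagger[Q_{n-1}^{c,N}(x)]=\xi_2^c(x;n)\,Q_n^{c,N}(x),$$ i.e. they are lowering and raising operators for $\{Q_n^{c,N}\}$.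
   Context: $\{P_n\}$ is the monic orthogonal polynomial sequence (MOPS) for $\mu$, $\|f\|_\mu^2=\int f^2d\mu$; $\{Q_n^c\}$ is the MOPS for $\langle f,g\rangle_\nu=\int fg\frac{1}{x-c}d\mu$; $\{Q_n^{c,N}\}$ is the MOPS for $\langle f,g\rangle_{\nu_N}=\int fg\frac{1}{x-c}d\mu+Nf(c)g(c)$. $\Lambda_n^c=\frac{\pi_{n-1}-r_{n-1}}{1+NB_n^c}-\pi_{n-1}$, where $\pi_{n-1}=P_n(c)/P_{n-1}(c)$, $r_{n-1}=F_n(c)/F_{n-1}(c)$ with $F_n(s)=\int\frac{P_n(x)}{x-s}d\mu(x)$, $F_{-1}=1$, and $B_n^c=\frac{-Q_n^c(c)P_{n-1}(c)}{\|P_{n-1}\|_\mu^2}$; it is the constant with $Q_n^{c,N}=P_n+\Lambda_n^cP_{n-1}$. The statement concerns indices $n$ for which all displayed quantities are defined. *)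

theory Defs
  imports "HOL-Analysis.Analysis" "HOL-Computational_Algebra.Polynomial"
begin

definition mu_support :: "real measure \<Rightarrow> real set" where
  "mu_support \<mu> = {x. \<forall>e>0. emeasure \<mu> (ball x e) > 0}"

definition ip_mu :: "real measure \<Rightarrow> real poly \<Rightarrow> real poly \<Rightarrow> real" where
  "ip_mu \<mu> f g = (LINT x|\<mu>. poly f x * poly g x)"

definition ip_nu :: "real measure \<Rightarrow> real \<Rightarrow> real poly \<Rightarrow> real poly \<Rightarrow> real" where
  "ip_nu \<mu> c f g = (LINT x|\<mu>. poly f x * poly g x * (1 / (x - c)))"

definition ip_nuN :: "real measure \<Rightarrow> real \<Rightarrow> real \<Rightarrow> real poly \<Rightarrow> real poly \<Rightarrow> real" where
  "ip_nuN \<mu> c N f g = ip_nu \<mu> c f g + N * poly f c * poly g c"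

definition is_MOPS :: "(real poly \<Rightarrow> real poly \<Rightarrow> real) \<Rightarrow> (nat \<Rightarrow> real poly) \<Rightarrow> bool" where
  "is_MOPS ip Q \<longleftrightarrow> (\<forall>m. degree (Q m) = m \<and> lead_coeff (Q m) = 1 \<and>
      (\<forall>k<m. ip (Q m) (monom 1 k) = 0) \<and> ip (Q m) (Q m) \<noteq> 0)"

definition Fn :: "real measure \<Rightarrow> (nat \<Rightarrow> real poly) \<Rightarrow> nat \<Rightarrow> real \<Rightarrow> real" where
  "Fn \<mu> P m s = (LINT x|\<mu>. poly (P m) x / (x - s))"

definition Bc :: "real measure \<Rightarrow> (nat \<Rightarrow> real poly) \<Rightarrow> (nat \<Rightarrow> real poly) \<Rightarrow> real \<Rightarrow> nat \<Rightarrow> real" where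
  "Bc \<mu> P Qc c m = - poly (Qc m) c * poly (P (m - 1)) c / ip_mu \<mu> (P (m - 1)) (P (m - 1))"

definition LambdaC :: "real measure \<Rightarrow> (nat \<Rightarrow> real poly) \<Rightarrow> (nat \<Rightarrow> real poly) \<Rightarrow> real \<Rightarrow> real \<Rightarrow> nat \<Rightarrow> real" where
  "LambdaC \<mu> P Qc c N m =
     (let pi = poly (P m) c / poly (P (m - 1)) c;
          r = Fn \<mu> P m c / Fn \<mu> P (m - 1) c
      in (pi - r) / (1 + N * Bc \<mu> P Qc c m) - pi)"

(* the coefficient functions of the theorem; L = Lambda^c, bet/gam recurrence coefficients,
   sig, a, b structure-relation polynomials *)
definition B2 :: "(nat \<Rightarrow> real) \<Rightarrow> (nat \<Rightarrow> real) \<Rightarrow> (nat \<Rightarrow> real) \<Rightarrow> nat \<Rightarrow> real \<Rightarrow> real" where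
  "B2 L bet gam n x = L (n - 1) * (1 / L (n - 1) + (x - bet (n - 1)) / gam (n - 1))"

definition Delta :: "(nat \<Rightarrow> real) \<Rightarrow> (nat \<Rightarrow> real) \<Rightarrow> (nat \<Rightarrow> real) \<Rightarrow> nat \<Rightarrow> real poly" where
  "Delta L bet gam n =
     smult (L (n - 1)) ([:1 / L (n - 1):] + smult (1 / gam (n - 1)) [:- bet (n - 1), 1:])
     + [:L n * L (n - 1) / gam (n - 1):]"

definition C1 :: "real poly \<Rightarrow> (nat \<Rightarrow> real poly) \<Rightarrow> (nat \<Rightarrow> real poly) \<Rightarrow> (nat \<Rightarrow> real) \<Rightarrow> (nat \<Rightarrow> real) \<Rightarrow> (nat \<Rightarrow> real) \<Rightarrow> nat \<Rightarrow> real \<Rightarrow> real" where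
  "C1 sig a b L bet gam n x =
     (1 / poly sig x) * (poly (a n) x - L n * poly (b (n - 1)) x / gam (n - 1))"

definition D1 :: "real poly \<Rightarrow> (nat \<Rightarrow> real poly) \<Rightarrow> (nat \<Rightarrow> real poly) \<Rightarrow> (nat \<Rightarrow> real) \<Rightarrow> (nat \<Rightarrow> real) \<Rightarrow> (nat \<Rightarrow> real) \<Rightarrow> nat \<Rightarrow> real \<Rightarrow> real" where
  "D1 sig a b L bet gam n x =
     (1 / poly sig x) * (poly (b n) x + L n * poly (b (n - 1)) x *
        (poly (a (n - 1)) x / poly (b (n - 1)) x + (x - bet (n - 1)) / gam (n - 1)))"

definition C2 :: "real poly \<Rightarrow> (nat \<Rightarrow> real poly) \<Rightarrow> (nat \<Rightarrow> real poly) \<Rightarrow> (nat \<Rightarrow> real) \<Rightarrow> (nat \<Rightarrow> real) \<Rightarrow> (nat \<Rightarrow> real) \<Rightarrow> nat \<Rightarrow> real \<Rightarrow> real" where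
  "C2 sig a b L bet gam n x =
     (- L (n - 1) / poly sig x) * (poly (a n) x / gam (n - 1) +
        poly (b (n - 1)) x / gam (n - 1) * (1 / L (n - 1) + (x - bet (n - 1)) / gam (n - 1)))"

definition D2 :: "real poly \<Rightarrow> (nat \<Rightarrow> real poly) \<Rightarrow> (nat \<Rightarrow> real poly) \<Rightarrow> (nat \<Rightarrow> real) \<Rightarrow> (nat \<Rightarrow> real) \<Rightarrow> (nat \<Rightarrow> real) \<Rightarrow> nat \<Rightarrow> real \<Rightarrow> real" where
  "D2 sig a b L bet gam n x =
     (L (n - 1) / poly sig x) *
       ((poly sig x - poly (b n) x) / gam (n - 1) +
        poly (b (n - 1)) x * (poly (a (n - 1)) x / poly (b (n - 1)) x + (x - bet (n - 1)) / gam (n - 1))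
          * (1 / L (n - 1) + (x - bet (n - 1)) / gam (n - 1)))"

definition xi_c :: "(real \<Rightarrow> real) \<Rightarrow> (real \<Rightarrow> real) \<Rightarrow> (nat \<Rightarrow> real) \<Rightarrow> (nat \<Rightarrow> real) \<Rightarrow> (nat \<Rightarrow> real) \<Rightarrow> nat \<Rightarrow> real \<Rightarrow> real" where
  "xi_c Ck Dk L bet gam n x =
     (Ck x * B2 L bet gam n x * gam (n - 1) + Dk x * L (n - 1)) / (poly (Delta L bet gam n) x * gam (n - 1))"

definition eta_c :: "(real \<Rightarrow> real) \<Rightarrow> (real \<Rightarrow> real) \<Rightarrow> (nat \<Rightarrow> real) \<Rightarrow> (nat \<Rightarrow> real) \<Rightarrow> (nat \<Rightarrow> real) \<Rightarrow> nat \<Rightarrow> real \<Rightarrow> real" where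
  "eta_c Ck Dk L bet gam n x = (Dk x - Ck x * L n) / poly (Delta L bet gam n) x"

end

theory Submission
  imports Defs
begin


definition bil :: "(real poly \<Rightarrow> real poly \<Rightarrow> real) \<Rightarrow> bool" where
 "bil ip \<longleftrightarrow> (\<forall>p q r. ip (p+q) r = ip p r + ip q r) \<and> (\<forall>a p r. ip (smult a p) r = a * ip p r) \<and> (\<forall>p q. ip p q = ip q p)"

lemma bil_add1: "bil ip \<Longrightarrow> ip (p+q) r = ip p r + ip q r" unfolding bil_def by blast
lemma bil_smult1: "bil ip \<Longrightarrow> ip (smult a p) r = a * ip p r" unfolding bil_def by blast
lemma bil_sym: "bil ip \<Longrightarrow> ip p q = ip q p" unfolding bil_def by blast
lemma bil_add2: "bil ip \<Longrightarrow> ip r (p+q) = ip r p + ip r q" by (metis bil_add1 bil_sym)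
lemma bil_smult2: "bil ip \<Longrightarrow> ip r (smult a p) = a * ip r p" by (metis bil_smult1 bil_sym)
lemma bil_zero2: "bil ip \<Longrightarrow> ip r 0 = 0"
  using bil_smult2[of ip r 0 0] by simp
lemma bil_diff2: "bil ip \<Longrightarrow> ip r (p-q) = ip r p - ip r q"
  using bil_add2[of ip r "p-q" q] by simp
lemma bil_diff1: "bil ip \<Longrightarrow> ip (p-q) r = ip p r - ip q r"
  using bil_add1[of ip "p-q" q r] by simp
lemma bil_sum2: "bil ip \<Longrightarrow> ip r (sum g S) = (\<Sum>i\<in>S. ip r (g i))"
  by (induction S rule: infinite_finite_induct) (auto simp: bil_zero2 bil_add2)

lemma lin_vanish:
  assumes "bil ip" "\<forall>k<m. ip f (monom 1 k) = 0" "degree q < m"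
  shows "ip f q = 0"
proof -
  have "ip f q = ip f (\<Sum>i\<le>degree q. smult (coeff q i) (monom 1 i))"
    by (simp add: smult_monom poly_as_sum_of_monoms)
  also have "\<dots> = (\<Sum>i\<le>degree q. coeff q i * ip f (monom 1 i))"
    using assms(1) by (simp add: bil_sum2 bil_smult2)
  also have "\<dots> = 0" using assms(2,3) by (intro sum.neutral) auto
  finally show ?thesis .
qed

lemma MOPS_deg: "is_MOPS ip Q \<Longrightarrow> degree (Q m) = m"
  unfolding is_MOPS_def by (drule spec[of _ m]) (elim conjE)
lemma MOPS_lc: "is_MOPS ip Q \<Longrightarrow> lead_coeff (Q m) = 1"
  unfolding is_MOPS_def by (drule spec[of _ m]) (elim conjE)
lemma MOPS_nz: "is_MOPS ip Q \<Longrightarrow> ip (Q m) (Q m) \<noteq> 0"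
  unfolding is_MOPS_def by (drule spec[of _ m]) (elim conjE)

lemma MOPS_orth:
  assumes "bil ip" "is_MOPS ip Q" "degree q < m"
  shows "ip (Q m) q = 0"
  using assms by (intro lin_vanish[of ip m]) (auto simp: is_MOPS_def)

lemma monic_diff:
  fixes p q :: "real poly"
  assumes "degree p = m" "degree q = m" "lead_coeff p = 1" "lead_coeff q = 1"
  shows "p - q = 0 \<or> degree (p - q) < m"
proof (rule ccontr)
  assume "\<not> ?thesis"
  hence ne: "p - q \<noteq> 0" and ge: "degree (p - q) \<ge> m" by auto
  have "degree (p - q) \<le> m" using assms degree_diff_le[of p m q] by simp
  with ge have "degree (p - q) = m" by simp
  hence "lead_coeff (p - q) = 0" using assms by simp
  with ne show False by (metis leading_coeff_0_iff)
qed

lemma MOPS_unique: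
  assumes bl: "bil ip" and Q: "is_MOPS ip Q" and dp: "degree p = m" and lp: "lead_coeff p = 1"
    and orth: "\<forall>k<m. ip p (monom 1 k) = 0"
  shows "p = Q m"
proof (rule ccontr)
  assume ne0: "p \<noteq> Q m"
  define d where "d = p - Q m"
  have QQ: "degree (Q m) = m" "lead_coeff (Q m) = 1" using MOPS_deg[OF Q] MOPS_lc[OF Q] by auto
  have "d = 0 \<or> degree d < m" unfolding d_def
    using monic_diff[OF dp QQ(1) lp QQ(2)] .
  with ne0 have dne: "d \<noteq> 0" and dl: "degree d < m" by (auto simp: d_def)
  define j where "j = degree d"
  define l where "l = lead_coeff d"
  have l0: "l \<noteq> 0" using dne by (simp add: l_def)
  have dQj: "degree (Q j) = j" "lead_coeff (Q j) = 1" "ip (Q j) (Q j) \<noteq> 0"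
    using MOPS_deg[OF Q] MOPS_lc[OF Q] MOPS_nz[OF Q] by auto
  define e where "e = d - smult l (Q j)"
  have "e = 0 \<or> degree e < j"
  proof (rule ccontr)
    assume A: "\<not> (e = 0 \<or> degree e < j)"
    have "degree (smult l (Q j)) \<le> j" using dQj(1) degree_smult_le[of l "Q j"] by simp
    hence "degree e \<le> j" unfolding e_def using degree_diff_le[of d j "smult l (Q j)"] j_def by simp
    with A have "degree e = j" by simp
    moreover have "coeff e j = 0" using dQj by (simp add: e_def l_def j_def)
    ultimately have "lead_coeff e = 0" by simp
    hence "e = 0" by simp
    with A show False by simp
  qed
  hence e0: "ip (Q j) e = 0"
  proof
    assume "e = 0" thus ?thesis using bil_zero2[OF bl] by simp
  next
    assume "degree e < j" thus ?thesis using MOPS_orth[OF bl Q] by simp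
  qed
  have o1: "ip p (Q j) = 0" using lin_vanish[OF bl orth] dl dQj(1) j_def by simp
  have o2: "ip (Q m) (Q j) = 0" using MOPS_orth[OF bl Q] dl dQj(1) j_def by simp
  have "ip d (Q j) = 0" unfolding d_def using o1 o2 bil_diff1[OF bl] by simp
  hence "ip (Q j) d = 0" using bil_sym[OF bl] by simp
  moreover have "d = smult l (Q j) + e" by (simp add: e_def)
  ultimately have "ip (Q j) (smult l (Q j)) + ip (Q j) e = 0" using bil_add2[OF bl] by metis
  hence "l * ip (Q j) (Q j) = 0" using e0 bil_smult2[OF bl] by simp
  with l0 dQj show False by simp
qed



context
  fixes \<mu> :: "real measure" and c :: real
  assumes borel: "sets \<mu> = sets borel" and moments: "\<forall>k::nat. integrable \<mu> (\<lambda>x. x^k)"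
    and c_out: "c \<notin> mu_support \<mu>"
begin

lemma meas: assumes "f \<in> borel_measurable borel" shows "f \<in> borel_measurable \<mu>"
  by (subst measurable_cong_sets[OF borel refl]) (rule assms)

lemma meas_poly: "(\<lambda>x. poly p x) \<in> borel_measurable \<mu>"
  by (intro meas borel_measurable_continuous_onI) (auto intro: continuous_intros)

lemma meas_inv: "(\<lambda>x::real. 1 / (x - c)) \<in> borel_measurable borel"
  by (rule borel_measurable_divide) simp_all

lemma meas_nu: "(\<lambda>x. poly p x * (1 / (x - c))) \<in> borel_measurable \<mu>"
  by (intro borel_measurable_times meas_poly meas meas_inv)

lemma int_poly: "integrable \<mu> (\<lambda>x. poly p x)"
proof -
  have "\<And>i. integrable \<mu> (\<lambda>x. coeff p i * x^i)" using moments by auto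
  thus ?thesis unfolding poly_altdef by (intro Bochner_Integration.integrable_sum) auto
qed

lemma ball_null: obtains e where "e > 0" "ball c e \<in> null_sets \<mu>"
proof -
  from c_out obtain e where e: "e > 0" "\<not> emeasure \<mu> (ball c e) > 0"
    unfolding mu_support_def by auto
  hence "emeasure \<mu> (ball c e) = 0" by (simp add: not_gr_zero)
  moreover have "ball c e \<in> sets \<mu>" using borel by simp
  ultimately show ?thesis using that e by (auto simp: null_sets_def)
qed

lemma AE_far: obtains e where "e > 0" "AE x in \<mu>. e \<le> \<bar>x - c\<bar>"
proof -
  obtain e where e: "e > 0" "ball c e \<in> null_sets \<mu>" using ball_null by blast
  have "AE x in \<mu>. e \<le> \<bar>x - c\<bar>"
    by (rule AE_I'[OF e(2)]) (auto simp: dist_real_def)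
  with e that show ?thesis by blast
qed

lemma AE_ne: "AE x in \<mu>. x \<noteq> c"
proof -
  obtain e where e: "e > 0" "AE x in \<mu>. e \<le> \<bar>x - c\<bar>" using AE_far by blast
  from e(2) show ?thesis by eventually_elim (use e(1) in auto)
qed

lemma int_nu: "integrable \<mu> (\<lambda>x. poly p x * (1 / (x - c)))"
proof -
  obtain e where e: "e > 0" "AE x in \<mu>. e \<le> \<bar>x - c\<bar>" using AE_far by blast
  show ?thesis
  proof (rule Bochner_Integration.integrable_bound[of _ "\<lambda>x. poly p x / e"])
    show "integrable \<mu> (\<lambda>x. poly p x / e)" using int_poly by simp
    show "(\<lambda>x. poly p x * (1 / (x - c))) \<in> borel_measurable \<mu>" by (rule meas_nu)
    show "AE x in \<mu>. norm (poly p x * (1 / (x - c))) \<le> norm (poly p x / e)"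
      using e(2)
    proof eventually_elim
      case (elim x)
      have "\<bar>x - c\<bar> > 0" using elim e(1) by linarith
      hence "1 / \<bar>x - c\<bar> \<le> 1 / e" using elim e(1) by (simp add: frac_le)
      hence "\<bar>poly p x\<bar> * (1 / \<bar>x - c\<bar>) \<le> \<bar>poly p x\<bar> * (1 / e)"
        by (intro mult_left_mono) auto
      thus ?case using e(1) by (simp add: abs_mult)
    qed
  qed
qed

lemma int_prod: "integrable \<mu> (\<lambda>x. poly f x * poly g x)"
  using int_poly[of "f*g"] by simp

lemma int_prod_nu: "integrable \<mu> (\<lambda>x. poly f x * poly g x * (1 / (x - c)))"
  using int_nu[of "f*g"] by simp

lemma bil_mu: "bil (ip_mu \<mu>)"
  unfolding bil_def ip_mu_def
proof (intro conjI allI)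
  fix p q r
  show "(LINT x|\<mu>. poly (p + q) x * poly r x) = (LINT x|\<mu>. poly p x * poly r x) + (LINT x|\<mu>. poly q x * poly r x)"
    using Bochner_Integration.integral_add[OF int_prod[of p r] int_prod[of q r]] by (simp add: distrib_right)
  show "(LINT x|\<mu>. poly p x * poly q x) = (LINT x|\<mu>. poly q x * poly p x)" by (simp add: mult.commute)
next
  fix a p r
  show "(LINT x|\<mu>. poly (smult a p) x * poly r x) = a * (LINT x|\<mu>. poly p x * poly r x)"
    by (simp add: mult.assoc)
qed

lemma bil_nu: "bil (ip_nu \<mu> c)"
  unfolding bil_def ip_nu_def
proof (intro conjI allI)
  fix p q r
  show "(LINT x|\<mu>. poly (p + q) x * poly r x * (1 / (x - c))) = (LINT x|\<mu>. poly p x * poly r x * (1 / (x - c))) + (LINT x|\<mu>. poly q x * poly r x * (1 / (x - c)))"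
    using Bochner_Integration.integral_add[OF int_prod_nu[of p r] int_prod_nu[of q r]] by (simp add: distrib_right add_divide_distrib)
  show "(LINT x|\<mu>. poly p x * poly q x * (1 / (x - c))) = (LINT x|\<mu>. poly q x * poly p x * (1 / (x - c)))" by (simp add: mult.commute)
next
  fix a p r
  show "(LINT x|\<mu>. poly (smult a p) x * poly r x * (1 / (x - c))) = a * (LINT x|\<mu>. poly p x * poly r x * (1 / (x - c)))"
    using Bochner_Integration.integral_mult_right_zero[of \<mu> a "\<lambda>x. poly p x * poly r x * (1 / (x - c))"]
    by (simp add: mult.assoc)
qed

lemma bil_nuN: "bil (ip_nuN \<mu> c N)"
  using bil_nu unfolding bil_def ip_nuN_def by (auto simp: algebra_simps)

lemma nu_shift: "ip_nu \<mu> c f ([:-c,1:] * q) = ip_mu \<mu> f q"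
  unfolding ip_nu_def ip_mu_def
proof (rule integral_cong_AE)
  show "(\<lambda>x. poly f x * poly ([:- c, 1:] * q) x * (1 / (x - c))) \<in> borel_measurable \<mu>"
    using meas_nu[of "f * ([:- c, 1:] * q)"] by simp
  show "(\<lambda>x. poly f x * poly q x) \<in> borel_measurable \<mu>" using meas_poly[of "f*q"] by simp
  show "AE x in \<mu>. poly f x * poly ([:- c, 1:] * q) x * (1 / (x - c)) = poly f x * poly q x"
    using AE_ne by eventually_elim (auto simp: field_simps)
qed

lemma nuN_shift: "ip_nuN \<mu> c N f ([:-c,1:] * q) = ip_mu \<mu> f q"
  unfolding ip_nuN_def using nu_shift by simp

lemma mu_x: "ip_mu \<mu> ([:0,1:] * f) g = ip_mu \<mu> f ([:0,1:] * g)"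
  unfolding ip_mu_def by (simp add: mult_ac)

lemma Fn_nu: "Fn \<mu> P m c = ip_nu \<mu> c (P m) 1"
  unfolding Fn_def ip_nu_def by simp

end


lemma core:
  fixes A B C D B2 L L1 g Dl :: real
  assumes "Dl = B2 + L * L1 / g" "Dl \<noteq> 0" "g \<noteq> 0"
  shows "C * A + D * B = ((C * B2 * g + D * L1) / (Dl * g)) * (A + L * B)
           + ((D - C * L) / Dl) * (- (L1 / g) * A + B2 * B)"
proof -
  define E where "E = B2 * g + L * L1"
  have DE: "Dl * g = E" using assms by (simp add: E_def field_simps)
  have Dl: "Dl = E / g" using DE assms(3) by (simp add: field_simps)
  have nz: "E \<noteq> 0" using DE assms(2,3) by (metis mult_eq_0_iff)
  have x1: "(C * B2 * g + D * L1) / (Dl * g) = (C * B2 * g + D * L1) / E" using DE by simp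
  have x2: "(D - C * L) / Dl = (D - C * L) * g / E" using Dl by simp
  have x3: "(D - C * L) * g / E * (- (L1 / g) * A + B2 * B) = (D - C * L) * (- L1 * A + g * B2 * B) / E"
    using assms(3) nz by (simp add: field_simps)
  have num: "(C * B2 * g + D * L1) * (A + L * B) + (D - C * L) * (- L1 * A + g * B2 * B) = (C * A + D * B) * E"
    unfolding E_def by (simp add: algebra_simps)
  have "((C * B2 * g + D * L1) / (Dl * g)) * (A + L * B) + ((D - C * L) / Dl) * (- (L1 / g) * A + B2 * B)
     = ((C * B2 * g + D * L1) * (A + L * B) + (D - C * L) * (- L1 * A + g * B2 * B)) / E"
    unfolding x1 x2 x3 using nz by (simp add: field_simps)
  also have "\<dots> = C * A + D * B" unfolding num using nz by simp
  finally show ?thesis by simp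
qed

lemma deriv1:
  fixes A B C A' B' x bt g s an bn am bm L :: real
  assumes "x * B = A + bt * B + g * C" "s * A' = an * A + bn * B" "s * B' = am * B + bm * C"
    "g \<noteq> 0" "s \<noteq> 0" "bm \<noteq> 0"
  shows "A' + L * B' = ((1 / s) * (an - L * bm / g)) * A
     + ((1 / s) * (bn + L * bm * (am / bm + (x - bt) / g))) * B"
proof -
  have C: "C = (x * B - A - bt * B) / g" using assms(1,4) by (simp add: field_simps)
  have A': "A' = (an * A + bn * B) / s" using assms(2,5) by (simp add: field_simps)
  have B': "B' = (am * B + bm * C) / s" using assms(3,5) by (simp add: field_simps)
  show ?thesis unfolding A' B' C using assms(4,5,6) by (simp add: field_simps)
qed

lemma deriv2:
  fixes A B C A' B' C' x bt g s an bn am bm L1 :: real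
  assumes "x * B = A + bt * B + g * C" "s * A' = an * A + bn * B" "s * B' = am * B + bm * C"
    "B + x * B' = A' + bt * B' + g * C'"
    "g \<noteq> 0" "s \<noteq> 0" "bm \<noteq> 0" "L1 \<noteq> 0"
  shows "B' + L1 * C' = ((- L1 / s) * (an / g + bm / g * (1 / L1 + (x - bt) / g))) * A
     + ((L1 / s) * ((s - bn) / g + bm * (am / bm + (x - bt) / g) * (1 / L1 + (x - bt) / g))) * B"
proof -
  have C: "C = (x * B - A - bt * B) / g" using assms(1,5) by (simp add: field_simps)
  have C': "C' = (B + x * B' - A' - bt * B') / g" using assms(4,5) by (simp add: field_simps)
  have A': "A' = (an * A + bn * B) / s" using assms(2,6) by (simp add: field_simps)
  have B': "B' = (am * B + bm * C) / s" using assms(3,6) by (simp add: field_simps)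
  show ?thesis unfolding C' unfolding A' B' C using assms(5-8) by (simp add: field_simps)
qed

lemma poly_ext_eq: fixes p q :: "real poly" assumes "\<And>x. poly p x = poly q x" shows "p = q"
  using assms poly_eq_poly_eq_iff[of p q] by auto

lemma deg0_one: fixes p :: "real poly" assumes "degree p = 0" "lead_coeff p = 1" shows "p = 1"
  using degree_0_id[OF assms(1)] assms by (metis one_pCons)

lemma xmonic: fixes p :: "real poly" assumes "degree p = k" "lead_coeff p = 1"
  shows "degree ([:0,1:] * p) = Suc k \<and> lead_coeff ([:0,1:] * p) = 1"
proof -
  have p0: "p \<noteq> 0" using assms by auto
  have "[:0,1:] * p = pCons 0 p" by simp
  thus ?thesis using degree_pCons_eq[OF p0, of 0] assms by simp
qed

lemma cand_deg: fixes p q :: "real poly"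
  assumes "m \<ge> 1" "degree p = m" "lead_coeff p = 1" "degree q = m - 1"
  shows "degree (p + smult t q) = m \<and> lead_coeff (p + smult t q) = 1"
proof -
  have "degree (smult t q) < degree p" using assms degree_smult_le[of t q] by linarith
  hence d: "degree (p + smult t q) = m" using degree_add_eq_left assms(2) by metis
  have "coeff q m = 0" using assms by (intro coeff_eq_0) simp
  thus ?thesis using d assms by simp
qed

lemma cand_orth:
  assumes bl: "bil ip" and sh: "\<forall>q. ip f ([:-c,1:] * q) = ipm f q"
    and lo: "\<forall>q. degree q < m - 1 \<longrightarrow> ipm f q = 0" and one: "ip f 1 = 0" and m: "m \<ge> 1"
  shows "\<forall>k<m. ip f (monom 1 k) = 0"
proof (intro allI impI)
  fix k assume k: "k < m"
  show "ip f (monom 1 k) = 0"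
  proof (cases "k = 0")
    case True thus ?thesis using one by (simp add: one_pCons monom_0)
  next
    case False
    define r :: "real poly" where "r = monom 1 k"
    define s where "s = synthetic_div r c"
    have r: "r = [:-c,1:] * s + smult (poly r c) 1"
      using synthetic_div_correct'[of c r] by (simp add: s_def)
    have ds: "degree s < m - 1" using False k
      by (simp add: s_def degree_synthetic_div r_def degree_monom_eq)
    have "ip f r = ip f ([:-c,1:] * s) + poly r c * ip f 1"
      using r bl by (metis bil_add2 bil_smult2)
    also have "\<dots> = 0" using sh lo ds one by simp
    finally show ?thesis by (simp add: r_def)
  qed
qed

lemma lam_alg: fixes pm p1 Fm F1 N :: real
  assumes p1: "p1 \<noteq> 0" and F1: "F1 \<noteq> 0" and E0: "F1 + N * p1 \<noteq> 0"
  shows "(pm / p1 - Fm / F1) / (1 + N * (p1 / F1)) - pm / p1 = - (Fm + N * pm) / (F1 + N * p1)"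
proof -
  obtain E where E: "E = F1 + N * p1" by blast
  have Enz: "E \<noteq> 0" using E E0 by simp
  define X where "X = pm * F1 - Fm * p1"
  have e: "1 + N * (p1 / F1) = E / F1" using F1 E by (simp add: field_simps)
  have a: "pm / p1 - Fm / F1 = X / (p1 * F1)" using p1 F1 by (simp add: X_def field_simps)
  have b: "X / (p1 * F1) / (E / F1) = X / (p1 * E)" using p1 F1 Enz by (simp add: field_simps)
  have c: "X / (p1 * E) - pm / p1 = (X - pm * E) / (p1 * E)" using p1 Enz by (simp add: field_simps)
  have d: "X - pm * E = - p1 * (Fm + N * pm)" unfolding X_def E by (simp add: algebra_simps)
  have f: "- p1 * (Fm + N * pm) / (p1 * E) = - (Fm + N * pm) / E" using p1 Enz by (simp add: minus_divide_left)
  have "(pm / p1 - Fm / F1) / (1 + N * (p1 / F1)) - pm / p1 = X / (p1 * F1) / (E / F1) - pm / p1"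
    unfolding e a ..
  also have "\<dots> = X / (p1 * E) - pm / p1" by (simp only: b)
  also have "\<dots> = (X - pm * E) / (p1 * E)" by (rule c)
  also have "\<dots> = - p1 * (Fm + N * pm) / (p1 * E)" by (simp only: d)
  also have "\<dots> = - (Fm + N * pm) / E" by (rule f)
  finally show ?thesis using E by simp
qed

lemma bc_alg: fixes pm p1 Fm F1 :: real
  assumes F1: "F1 \<noteq> 0" and W0: "Fm * p1 - F1 * pm \<noteq> 0"
  shows "- (pm + - (Fm / F1) * p1) * p1 / (Fm * p1 - F1 * pm) = p1 / F1"
proof -
  obtain W where W: "W = Fm * p1 - F1 * pm" by blast
  have Wnz: "W \<noteq> 0" using W W0 by simp
  have "pm + - (Fm / F1) * p1 = - W / F1" using F1 unfolding W by (simp add: field_simps)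
  hence "- (pm + - (Fm / F1) * p1) * p1 / (Fm * p1 - F1 * pm) = (W / F1) * p1 / W" unfolding W[symmetric] by simp
  also have "\<dots> = p1 / F1" using Wnz by simp
  finally show ?thesis .
qed

lemma delta_gen: fixes l1 l g bt x :: real assumes "l1 \<noteq> 0"
  shows "l1 * (1 / l1 + (x - bt) / g) + l * l1 / g = (1 - l1 * bt / g + l * l1 / g) + x * (l1 / g)"
  using assms by (simp add: diff_divide_distrib distrib_left algebra_simps)



theorem theorem4:
  fixes \<mu> :: "real measure" and c N :: real
    and P Qc QcN :: "nat \<Rightarrow> real poly" and bet gam :: "nat \<Rightarrow> real"
    and sig :: "real poly" and a b :: "nat \<Rightarrow> real poly" and n :: nat
  defines "L \<equiv> LambdaC \<mu> P Qc c N"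
  assumes borel: "sets \<mu> = sets borel"
    and ac: "absolutely_continuous lborel \<mu>"
    and moments: "\<forall>k::nat. integrable \<mu> (\<lambda>x. x ^ k)"
    and supp_inf: "infinite (mu_support \<mu>)"
    and c_out: "c \<notin> mu_support \<mu>"
    and N_pos: "N > 0"
    and P_MOPS: "is_MOPS (ip_mu \<mu>) P"
    and Qc_MOPS: "is_MOPS (ip_nu \<mu> c) Qc"
    and QcN_MOPS: "is_MOPS (ip_nuN \<mu> c N) QcN"
    and rec0: "[:0, 1:] * P 0 = P 1 + smult (bet 0) (P 0)"
    and rec: "\<forall>m\<ge>1. [:0, 1:] * P m = P (Suc m) + smult (bet m) (P m) + smult (gam m) (P (m - 1))"
    and sig_nz: "sig \<noteq> 0"
    and struct: "\<forall>m\<ge>1. sig * pderiv (P m) = a m * P m + b m * P (m - 1)"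
    and deg_const: "\<exists>da db. \<forall>m\<ge>1. degree (a m) = da \<and> degree (b m) = db"
    and n_ge: "n \<ge> 2"
    and def1: "poly (P (n - 1)) c \<noteq> 0" and def2: "poly (P (n - 2)) c \<noteq> 0"
    and def3: "Fn \<mu> P (n - 1) c \<noteq> 0" and def4: "Fn \<mu> P (n - 2) c \<noteq> 0"
    and def5: "1 + N * Bc \<mu> P Qc c n \<noteq> 0" and def6: "1 + N * Bc \<mu> P Qc c (n - 1) \<noteq> 0"
    and def7: "L (n - 1) \<noteq> 0"
  shows "degree (Delta L bet gam n) = 1 \<and>
    (\<forall>x. poly sig x \<noteq> 0 \<and> poly (b (n - 1)) x \<noteq> 0 \<and> poly (Delta L bet gam n) x \<noteq> 0 \<longrightarrow>
       - xi_c (C1 sig a b L bet gam n) (D1 sig a b L bet gam n) L bet gam n x * poly (QcN n) x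
         + poly (pderiv (QcN n)) x
       = eta_c (C1 sig a b L bet gam n) (D1 sig a b L bet gam n) L bet gam n x * poly (QcN (n - 1)) x
     \<and>
       - eta_c (C2 sig a b L bet gam n) (D2 sig a b L bet gam n) L bet gam n x * poly (QcN (n - 1)) x
         + poly (pderiv (QcN (n - 1))) x
       = xi_c (C2 sig a b L bet gam n) (D2 sig a b L bet gam n) L bet gam n x * poly (QcN n) x)"
proof -
  note bm = bil_mu[OF borel moments c_out]
  note bn = bil_nu[OF borel moments c_out]
  note bN = bil_nuN[OF borel moments c_out]
  define F where "F = (\<lambda>m. Fn \<mu> P m c)"
  define pc where "pc = (\<lambda>m. poly (P m) c)"
  define h where "h = (\<lambda>m. ip_mu \<mu> (P m) (P m))"
  have degP: "\<And>m. degree (P m) = m" using MOPS_deg[OF P_MOPS] .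
  have lcP: "\<And>m. lead_coeff (P m) = 1" using MOPS_lc[OF P_MOPS] .
  have hnz: "\<And>m. h m \<noteq> 0" unfolding h_def using MOPS_nz[OF P_MOPS] .
  have orthP: "\<And>m q. degree q < m \<Longrightarrow> ip_mu \<mu> (P m) q = 0" using MOPS_orth[OF bm P_MOPS] .
  have P0: "P 0 = 1" using deg0_one degP lcP by blast
  have mu1: "\<And>m. m \<ge> 1 \<Longrightarrow> ip_mu \<mu> (P m) 1 = 0" using orthP by simp
  have Fnu: "\<And>m. F m = ip_nu \<mu> c (P m) 1" unfolding F_def using Fn_nu[OF borel moments c_out] .
  have nsh: "\<And>f q. ip_nu \<mu> c f ([:-c,1:] * q) = ip_mu \<mu> f q" using nu_shift[OF borel moments c_out] .
  have Nsh: "\<And>f q. ip_nuN \<mu> c N f ([:-c,1:] * q) = ip_mu \<mu> f q" using nuN_shift[OF borel moments c_out] .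
  have xsplit: "\<And>p. [:0,1:] * p = [:-c,1:] * p + smult c p"
    by (rule poly_ext_eq) (simp add: algebra_simps)
  have hrec: "\<And>k. k \<ge> 1 \<Longrightarrow> h k = gam k * h (k - 1)"
  proof -
    fix k :: nat assume k: "k \<ge> 1"
    have rk: "[:0,1:] * P k = P (Suc k) + smult (bet k) (P k) + smult (gam k) (P (k - 1))"
      using rec k by blast
    have e1: "ip_mu \<mu> ([:0,1:] * P k) (P (k - 1)) = gam k * h (k - 1)"
      unfolding rk h_def using bm k orthP[of "P (k - 1)" "Suc k"] orthP[of "P (k - 1)" k]
      by (simp add: bil_add1 bil_smult1 degP)
    have e2: "ip_mu \<mu> ([:0,1:] * P k) (P (k - 1)) = ip_mu \<mu> (P k) ([:0,1:] * P (k - 1))"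
      using mu_x[OF borel moments c_out] by blast
    define d where "d = [:0,1:] * P (k - 1) - P k"
    have xm: "degree ([:0,1:] * P (k - 1)) = k" "lead_coeff ([:0,1:] * P (k - 1)) = 1"
      using xmonic[OF degP lcP, of "k - 1"] k by auto
    have "d = 0 \<or> degree d < k" unfolding d_def using monic_diff[OF xm(1) degP xm(2) lcP] .
    hence d0: "ip_mu \<mu> (P k) d = 0" using orthP bil_zero2[OF bm] by blast
    have "ip_mu \<mu> (P k) ([:0,1:] * P (k - 1)) = ip_mu \<mu> (P k) (P k + d)" by (simp add: d_def)
    also have "\<dots> = h k" using d0 bil_add2[OF bm] by (simp add: h_def)
    finally show "h k = gam k * h (k - 1)" using e1 e2 by simp
  qed
  have Frec: "\<And>m. m \<ge> 1 \<Longrightarrow> F (Suc m) = (c - bet m) * F m - gam m * F (m - 1)"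
  proof -
    fix m :: nat assume m: "m \<ge> 1"
    have rm: "[:0,1:] * P m = P (Suc m) + smult (bet m) (P m) + smult (gam m) (P (m - 1))"
      using rec m by blast
    have "ip_nu \<mu> c ([:-c,1:] * P m) 1 = ip_nu \<mu> c 1 ([:-c,1:] * P m)" using bil_sym[OF bn] by blast
    also have "\<dots> = ip_mu \<mu> 1 (P m)" using nsh by blast
    also have "\<dots> = 0" using bil_sym[OF bm] mu1[OF m] by metis
    finally have z: "ip_nu \<mu> c ([:-c,1:] * P m) 1 = 0" .
    have "ip_nu \<mu> c ([:0,1:] * P m) 1 = ip_nu \<mu> c ([:-c,1:] * P m) 1 + ip_nu \<mu> c (smult c (P m)) 1"
      by (subst xsplit) (rule bil_add1[OF bn])
    hence "ip_nu \<mu> c ([:0,1:] * P m) 1 = c * F m"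
      using z bil_smult1[OF bn] by (simp add: Fnu)
    moreover have "ip_nu \<mu> c ([:0,1:] * P m) 1 = F (Suc m) + bet m * F m + gam m * F (m - 1)"
      unfolding rm using bn by (simp add: bil_add1 bil_smult1 Fnu)
    ultimately show "F (Suc m) = (c - bet m) * F m - gam m * F (m - 1)" by (simp add: algebra_simps)
  qed
  have pcrec: "\<And>m. m \<ge> 1 \<Longrightarrow> pc (Suc m) = (c - bet m) * pc m - gam m * pc (m - 1)"
  proof -
    fix m :: nat assume m: "m \<ge> 1"
    have "poly ([:0,1:] * P m) c = poly (P (Suc m) + smult (bet m) (P m) + smult (gam m) (P (m - 1))) c"
      using rec m by simp
    thus "pc (Suc m) = (c - bet m) * pc m - gam m * pc (m - 1)" by (simp add: pc_def algebra_simps)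
  qed
  have Wrel: "\<And>m. F (Suc m) * pc m - F m * pc (Suc m) = h m"
  proof -
    fix m show "F (Suc m) * pc m - F m * pc (Suc m) = h m"
    proof (induction m)
      case 0
      have P1a: "P 1 = [:0,1:] * 1 - smult (bet 0) 1" using rec0 unfolding P0 by (simp add: eq_diff_eq)
      have P1: "P 1 = [:-c,1:] * 1 + smult (c - bet 0) 1"
        unfolding P1a by (rule poly_ext_eq) (simp add: algebra_simps)
      have a: "ip_nu \<mu> c ([:-c,1:] * 1) 1 = h 0"
        using bil_sym[OF bn] nsh[of 1 1] by (metis P0 h_def)
      have "F 1 = ip_nu \<mu> c ([:-c,1:] * 1 + smult (c - bet 0) 1) 1" using Fnu[of 1] P1 by (simp only:)
      also have "\<dots> = ip_nu \<mu> c ([:-c,1:] * 1) 1 + (c - bet 0) * ip_nu \<mu> c 1 1"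
        by (simp only: bil_add1[OF bn] bil_smult1[OF bn])
      also have "\<dots> = h 0 + (c - bet 0) * F 0" using a Fnu[of 0] P0 by simp
      finally have "F 1 = h 0 + (c - bet 0) * F 0" .
      moreover have pc01: "pc 0 = 1" "pc (Suc 0) = c - bet 0"
      proof -
        show "pc 0 = 1" unfolding pc_def P0 by simp
        have "P (Suc 0) = [:-c,1:] * 1 + smult (c - bet 0) 1" using P1 by simp
        thus "pc (Suc 0) = c - bet 0" unfolding pc_def by simp
      qed
      ultimately show ?case by (simp add: pc01 algebra_simps)
    next
      case (Suc m)
      have "F (Suc (Suc m)) * pc (Suc m) - F (Suc m) * pc (Suc (Suc m))
          = gam (Suc m) * (F (Suc m) * pc m - F m * pc (Suc m))"
      proof -
        have f: "F (Suc (Suc m)) = (c - bet (Suc m)) * F (Suc m) - gam (Suc m) * F m" using Frec[of "Suc m"] by simp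
        have p: "pc (Suc (Suc m)) = (c - bet (Suc m)) * pc (Suc m) - gam (Suc m) * pc m" using pcrec[of "Suc m"] by simp
        show ?thesis unfolding f p by (simp add: algebra_simps)
      qed
      also have "\<dots> = h (Suc m)" using Suc hrec[of "Suc m"] by simp
      finally show ?case .
    qed
  qed
  have gnz: "gam (n - 1) \<noteq> 0" using hrec[of "n - 1"] hnz[of "n - 1"] n_ge by auto
  have key: "\<And>m. m \<ge> 1 \<Longrightarrow> pc (m - 1) \<noteq> 0 \<Longrightarrow> F (m - 1) \<noteq> 0 \<Longrightarrow> 1 + N * Bc \<mu> P Qc c m \<noteq> 0
      \<Longrightarrow> QcN m = P m + smult (L m) (P (m - 1))"
  proof -
    fix m :: nat assume m: "m \<ge> 1" and p1: "pc (m - 1) \<noteq> 0" and F1: "F (m - 1) \<noteq> 0"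
      and B1: "1 + N * Bc \<mu> P Qc c m \<noteq> 0"
    have cd: "\<And>t. degree (P m + smult t (P (m - 1))) = m \<and> lead_coeff (P m + smult t (P (m - 1))) = 1"
      using cand_deg[OF m degP lcP degP] .
    have lo: "\<And>t. \<forall>q. degree q < m - 1 \<longrightarrow> ip_mu \<mu> (P m + smult t (P (m - 1))) q = 0"
      using bm orthP by (simp add: bil_add1 bil_smult1)
    have nu1: "\<And>t. ip_nu \<mu> c (P m + smult t (P (m - 1))) 1 = F m + t * F (m - 1)"
      using bn by (simp add: bil_add1 bil_smult1 Fnu)
    define t where "t = - (F m / F (m - 1))"
    have one: "ip_nu \<mu> c (P m + smult t (P (m - 1))) 1 = 0" unfolding nu1 t_def using F1 by simp
    have sh: "\<forall>q. ip_nu \<mu> c (P m + smult t (P (m - 1))) ([:-c,1:] * q) = ip_mu \<mu> (P m + smult t (P (m - 1))) q"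
      using nsh by simp
    have "\<forall>k<m. ip_nu \<mu> c (P m + smult t (P (m - 1))) (monom 1 k) = 0"
      using cand_orth[where ipm="ip_mu \<mu>", OF bn sh lo[of t] one m] .
    hence Qcm: "Qc m = P m + smult t (P (m - 1))"
      using MOPS_unique[OF bn Qc_MOPS conjunct1[OF cd] conjunct2[OF cd]] by metis
    have W: "h (m - 1) = F m * pc (m - 1) - F (m - 1) * pc m" using Wrel[of "m - 1"] m by simp
    have Bc: "Bc \<mu> P Qc c m = pc (m - 1) / F (m - 1)"
    proof -
      have "Bc \<mu> P Qc c m = - (pc m + t * pc (m - 1)) * pc (m - 1) / h (m - 1)"
        unfolding Bc_def Qcm h_def pc_def by simp
      also have "\<dots> = pc (m - 1) / F (m - 1)"
        using F1 hnz[of "m - 1"] unfolding W t_def by (intro bc_alg) auto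
      finally show ?thesis .
    qed
    have FN: "F (m - 1) + N * pc (m - 1) \<noteq> 0"
    proof
      assume "F (m - 1) + N * pc (m - 1) = 0"
      hence "1 + N * (pc (m - 1) / F (m - 1)) = 0" using F1 by (simp add: field_simps)
      thus False using B1 unfolding Bc by simp
    qed
    have Lm: "L m = - (F m + N * pc m) / (F (m - 1) + N * pc (m - 1))"
      unfolding L_def LambdaC_def Let_def Bc
      using lam_alg[OF p1 F1 FN, of "pc m" "F m"] unfolding F_def pc_def by simp
    have one': "ip_nuN \<mu> c N (P m + smult (L m) (P (m - 1))) 1 = 0"
    proof -
      have "F m + L m * F (m - 1) + N * (pc m + L m * pc (m - 1)) = 0"
        using FN unfolding Lm by (simp add: field_simps)
      thus ?thesis unfolding ip_nuN_def nu1 by (simp add: pc_def algebra_simps)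
    qed
    have sh': "\<forall>q. ip_nuN \<mu> c N (P m + smult (L m) (P (m - 1))) ([:-c,1:] * q) = ip_mu \<mu> (P m + smult (L m) (P (m - 1))) q"
      using Nsh by simp
    have "\<forall>k<m. ip_nuN \<mu> c N (P m + smult (L m) (P (m - 1))) (monom 1 k) = 0"
      using cand_orth[where ipm="ip_mu \<mu>", OF bN sh' lo[of "L m"] one' m] .
    thus "QcN m = P m + smult (L m) (P (m - 1))"
      using MOPS_unique[OF bN QcN_MOPS conjunct1[OF cd] conjunct2[OF cd]] by metis
  qed
  have Qn: "QcN n = P n + smult (L n) (P (n - 1))"
  proof (rule key)
    show "1 \<le> n" using n_ge by simp
    show "pc (n - 1) \<noteq> 0" using def1 unfolding pc_def .
    show "F (n - 1) \<noteq> 0" using def3 unfolding F_def .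
    show "1 + N * Bc \<mu> P Qc c n \<noteq> 0" using def5 .
  qed
  have n21: "n - 1 - 1 = n - 2" by simp
  have Qn1: "QcN (n - 1) = P (n - 1) + smult (L (n - 1)) (P (n - 2))"
  proof -
    have "QcN (n - 1) = P (n - 1) + smult (L (n - 1)) (P (n - 1 - 1))"
    proof (rule key)
      show "1 \<le> n - 1" using n_ge by simp
      show "pc (n - 1 - 1) \<noteq> 0" using def2 unfolding pc_def n21 .
      show "F (n - 1 - 1) \<noteq> 0" using def4 unfolding F_def n21 .
      show "1 + N * Bc \<mu> P Qc c (n - 1) \<noteq> 0" using def6 .
    qed
    thus ?thesis unfolding n21 .
  qed
  have L1nz: "L (n - 1) \<noteq> 0" using def7 .
  have polyD: "\<And>x. poly (Delta L bet gam n) x = B2 L bet gam n x + L n * L (n - 1) / gam (n - 1)"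
    by (simp add: Delta_def B2_def algebra_simps diff_divide_distrib)
  have Deq: "Delta L bet gam n = [: 1 - L (n - 1) * bet (n - 1) / gam (n - 1) + L n * L (n - 1) / gam (n - 1), L (n - 1) / gam (n - 1) :]"
    by (rule poly_ext_eq) (simp only: polyD B2_def delta_gen[OF L1nz] poly_pCons poly_0 mult_zero_right add_0_right)
  have degD: "degree (Delta L bet gam n) = 1" unfolding Deq using L1nz gnz by simp
  have n1: "Suc (n - 1) = n" "n - 1 - 1 = n - 2" "n - 1 \<ge> 1" using n_ge by auto
  have recn: "[:0,1:] * P (n - 1) = P n + smult (bet (n - 1)) (P (n - 1)) + smult (gam (n - 1)) (P (n - 2))"
    using rec n1 by metis
  have stn: "sig * pderiv (P n) = a n * P n + b n * P (n - 1)" using struct n_ge by simp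
  have stn1: "sig * pderiv (P (n - 1)) = a (n - 1) * P (n - 1) + b (n - 1) * P (n - 2)"
    using struct n1 by metis
  have main: "poly sig x \<noteq> 0 \<and> poly (b (n - 1)) x \<noteq> 0 \<and> poly (Delta L bet gam n) x \<noteq> 0 \<longrightarrow>
       - xi_c (C1 sig a b L bet gam n) (D1 sig a b L bet gam n) L bet gam n x * poly (QcN n) x
         + poly (pderiv (QcN n)) x
       = eta_c (C1 sig a b L bet gam n) (D1 sig a b L bet gam n) L bet gam n x * poly (QcN (n - 1)) x
     \<and>
       - eta_c (C2 sig a b L bet gam n) (D2 sig a b L bet gam n) L bet gam n x * poly (QcN (n - 1)) x
         + poly (pderiv (QcN (n - 1))) x
       = xi_c (C2 sig a b L bet gam n) (D2 sig a b L bet gam n) L bet gam n x * poly (QcN n) x" for x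
  proof
    assume asm: "poly sig x \<noteq> 0 \<and> poly (b (n - 1)) x \<noteq> 0 \<and> poly (Delta L bet gam n) x \<noteq> 0"
    hence snz: "poly sig x \<noteq> 0" and bnz: "poly (b (n - 1)) x \<noteq> 0" and Dnz: "poly (Delta L bet gam n) x \<noteq> 0"
      by auto
    define A where "A = poly (P n) x"
    define B where "B = poly (P (n - 1)) x"
    define C where "C = poly (P (n - 2)) x"
    define A' where "A' = poly (pderiv (P n)) x"
    define B' where "B' = poly (pderiv (P (n - 1))) x"
    define C' where "C' = poly (pderiv (P (n - 2))) x"
    have r1: "x * B = A + bet (n - 1) * B + gam (n - 1) * C"
      using arg_cong[OF recn, of "\<lambda>p. poly p x"] by (simp add: A_def B_def C_def)
    have r2: "poly sig x * A' = poly (a n) x * A + poly (b n) x * B"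
      using arg_cong[OF stn, of "\<lambda>p. poly p x"] by (simp add: A_def B_def A'_def)
    have r3: "poly sig x * B' = poly (a (n - 1)) x * B + poly (b (n - 1)) x * C"
      using arg_cong[OF stn1, of "\<lambda>p. poly p x"] by (simp add: B_def C_def B'_def)
    have r4: "B + x * B' = A' + bet (n - 1) * B' + gam (n - 1) * C'"
      using arg_cong[OF arg_cong[OF recn, of pderiv], of "\<lambda>p. poly p x"]
      by (simp add: B_def A'_def B'_def C'_def pderiv_add pderiv_smult pderiv_mult pderiv_pCons algebra_simps)
    have QnV: "poly (QcN n) x = A + L n * B" unfolding Qn by (simp add: A_def B_def)
    have Qn1V: "poly (QcN (n - 1)) x = B + L (n - 1) * C" unfolding Qn1 by (simp add: B_def C_def)
    have QnD: "poly (pderiv (QcN n)) x = A' + L n * B'" unfolding Qn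
      by (simp add: A'_def B'_def pderiv_add pderiv_smult)
    have Qn1D: "poly (pderiv (QcN (n - 1))) x = B' + L (n - 1) * C'" unfolding Qn1
      by (simp add: B'_def C'_def pderiv_add pderiv_smult)
    have Qm: "B + L (n - 1) * C = - (L (n - 1) / gam (n - 1)) * A + B2 L bet gam n x * B"
    proof -
      have Ce: "C = (x * B - A - bet (n - 1) * B) / gam (n - 1)" using r1 gnz by (simp add: field_simps)
      show ?thesis unfolding Ce B2_def using gnz L1nz by (simp add: field_simps)
    qed
    have Dl: "poly (Delta L bet gam n) x = B2 L bet gam n x + L n * L (n - 1) / gam (n - 1)" by (rule polyD)
    have d1: "A' + L n * B' = C1 sig a b L bet gam n x * A + D1 sig a b L bet gam n x * B"
      unfolding C1_def D1_def by (rule deriv1[OF r1 r2 r3 gnz snz bnz])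
    have d2: "B' + L (n - 1) * C' = C2 sig a b L bet gam n x * A + D2 sig a b L bet gam n x * B"
      unfolding C2_def D2_def by (rule deriv2[OF r1 r2 r3 r4 gnz snz bnz L1nz])
    note c1 = core[OF Dl Dnz gnz, where C="C1 sig a b L bet gam n x" and A=A and D="D1 sig a b L bet gam n x" and B=B]
    note c2 = core[OF Dl Dnz gnz, where C="C2 sig a b L bet gam n x" and A=A and D="D2 sig a b L bet gam n x" and B=B]
    show "- xi_c (C1 sig a b L bet gam n) (D1 sig a b L bet gam n) L bet gam n x * poly (QcN n) x
         + poly (pderiv (QcN n)) x
       = eta_c (C1 sig a b L bet gam n) (D1 sig a b L bet gam n) L bet gam n x * poly (QcN (n - 1)) x
     \<and>
       - eta_c (C2 sig a b L bet gam n) (D2 sig a b L bet gam n) L bet gam n x * poly (QcN (n - 1)) x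
         + poly (pderiv (QcN (n - 1))) x
       = xi_c (C2 sig a b L bet gam n) (D2 sig a b L bet gam n) L bet gam n x * poly (QcN n) x"
      unfolding xi_c_def eta_c_def QnV Qn1V QnD Qn1D d1 d2 Qm using c1 c2 by linarith
  qed
  show ?thesis using degD main by blast
qed


end
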